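(* Let $G$ be a gap-free finite simple graph, $s\geq1$, $e_1,\dots,e_s$ edges of $G$ (repetitions allowed), and $G'$ the graph associated to $(I(G)^{s+1}:e_1\cdots e_s)^{\mathrm{pol}}$. Let $Y=\{y_1,\dots,y_l\}$ be a set of vertices of $G'$, and suppose $u,v\notin Y$ are vertices of $G$ that are even-connected with respect to $e_1\cdots e_s$ via $u=p_0,\dots,p_{2k+1}=v$, such that for every even-connection $u''=p'_0,\dots,p'_{2k'+1}=v''$ with respect to $e_1\cdots e_s$ with $u'',v''\notin Y$ one has $k'\leq k$. Let $H=G'-Y$ and let $\operatorname{st}_H u$ be the set consisting of $u$ and its neighbors in $H$. Then $H-\operatorname{st}_H u$ is the disjoint union of a graph $G''$ obtained from $G$ by deleting vertices (an induced subgraph of $G$) and a set of isolated vertices, each of which is one of the new (polarization) vertices $x'$ of $G'$.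
   Context: $S=K[x_1,\dots,x_n]$ with the $x_i$ the vertices of $G$; $I(G)=(xy: xy\text{ an edge})$; edges identified with monomials; $(J:m)=\{f: fm\in J\}$; $J=(I(G)^{s+1}:e_1\cdots e_s)$ is generated by quadratic monomials. $J^{\mathrm{pol}}$ is generated by $x_ix_j$ ($i\ne j$) with $x_ix_j\in J$ and $x_kx_k'$ with $x_k^2\in J$; $G'$ has vertex set $V(G)\cup\{x_k': x_k^2\in J\}$ and edges $\{x_ix_j: i\ne j, x_ix_j\in J\}\cup\{x_kx_k': x_k^2\in J\}$. For a vertex set $W$, $H-W$ is the induced subgraph on the remaining vertices. Even-connection between $u,v$ (possibly equal) with respect to $e_1,\dots,e_s$: a sequence $p_0,\dots,p_{2k+1}$, $k\ge1$ (repeats allowed), with $p_0=u$, $p_{2k+1}=v$; each $p_{2l+1}p_{2l+2}$ ($0\le l\le k-1$) equal to some $e_i$; for every $i$, $|\{l: p_{2l+1}p_{2l+2}=e_i\}|\le|\{j: e_j=e_i\}|$; and each $p_rp_{r+1}$ ($0\le r\le2k$) an edge of $G$. Gap-free: no two vertex-disjoint edges $uv$, $xy$ with no edge between $\{u,v\}$ and $\{x,y\}$. *)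

theory Defs
  imports Main "HOL-Library.Multiset"
begin

definition simple_graph :: "'a set \<Rightarrow> ('a \<Rightarrow> 'a \<Rightarrow> bool) \<Rightarrow> bool" where
  "simple_graph V E \<longleftrightarrow> finite V \<and> (\<forall>a b. E a b \<longrightarrow> a \<in> V \<and> b \<in> V)
     \<and> (\<forall>a b. E a b \<longrightarrow> E b a) \<and> (\<forall>a. \<not> E a a)"

definition gap_free :: "('a \<Rightarrow> 'a \<Rightarrow> bool) \<Rightarrow> bool" where
  "gap_free E \<longleftrightarrow> \<not> (\<exists>u v x y. E u v \<and> E x y \<and> u \<noteq> x \<and> u \<noteq> y \<and> v \<noteq> x \<and> v \<noteq> y
       \<and> \<not> E u x \<and> \<not> E u y \<and> \<not> E v x \<and> \<not> E v y)"

text \<open>Monomials in the variables (vertices) are multisets of vertices; the edge xy is the monomial {#x,y#}.\<close>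
definition edge_mono :: "'a \<times> 'a \<Rightarrow> 'a multiset" where
  "edge_mono e = {#fst e, snd e#}"

text \<open>Monomial m lies in I(G)^n iff it is divisible by a product of n edges of G.\<close>
definition in_edge_ideal_pow :: "('a \<Rightarrow> 'a \<Rightarrow> bool) \<Rightarrow> nat \<Rightarrow> 'a multiset \<Rightarrow> bool" where
  "in_edge_ideal_pow E n m \<longleftrightarrow>
     (\<exists>fs. length fs = n \<and> (\<forall>f\<in>set fs. E (fst f) (snd f)) \<and> sum_list (map edge_mono fs) \<subseteq># m)"

text \<open>Monomial m lies in (I(G)^(s+1) : e_1...e_s), es = [e_1,...,e_s].\<close>
definition in_colon :: "('a \<Rightarrow> 'a \<Rightarrow> bool) \<Rightarrow> ('a \<times> 'a) list \<Rightarrow> 'a multiset \<Rightarrow> bool" where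
  "in_colon E es m \<longleftrightarrow> in_edge_ideal_pow E (Suc (length es)) (m + sum_list (map edge_mono es))"

text \<open>The graph G' of the polarization: original vertex x is Inl x, the new vertex x' is Inr x.\<close>
definition polG_vertices :: "'a set \<Rightarrow> ('a \<Rightarrow> 'a \<Rightarrow> bool) \<Rightarrow> ('a \<times> 'a) list \<Rightarrow> ('a + 'a) set" where
  "polG_vertices V E es = Inl ` V \<union> Inr ` {x \<in> V. in_colon E es {#x, x#}}"

fun polG_edge :: "'a set \<Rightarrow> ('a \<Rightarrow> 'a \<Rightarrow> bool) \<Rightarrow> ('a \<times> 'a) list \<Rightarrow> 'a + 'a \<Rightarrow> 'a + 'a \<Rightarrow> bool" where
  "polG_edge V E es (Inl x) (Inl y) = (x \<in> V \<and> y \<in> V \<and> x \<noteq> y \<and> in_colon E es {#x, y#})"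
| "polG_edge V E es (Inl x) (Inr y) = (x \<in> V \<and> x = y \<and> in_colon E es {#x, x#})"
| "polG_edge V E es (Inr x) (Inl y) = (y \<in> V \<and> x = y \<and> in_colon E es {#x, x#})"
| "polG_edge V E es (Inr x) (Inr y) = False"

definition even_connection :: "('a \<Rightarrow> 'a \<Rightarrow> bool) \<Rightarrow> ('a \<times> 'a) list \<Rightarrow> 'a \<Rightarrow> 'a \<Rightarrow> nat \<Rightarrow> (nat \<Rightarrow> 'a) \<Rightarrow> bool" where
  "even_connection E es u v k p \<longleftrightarrow>
     k \<ge> 1 \<and> p 0 = u \<and> p (2*k+1) = v
     \<and> (\<forall>l<k. \<exists>i<length es. {p (2*l+1), p (2*l+2)} = {fst (es!i), snd (es!i)})
     \<and> (\<forall>i<length es. card {l. l < k \<and> {p (2*l+1), p (2*l+2)} = {fst (es!i), snd (es!i)}}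
                     \<le> card {j. j < length es \<and> {fst (es!j), snd (es!j)} = {fst (es!i), snd (es!i)}})
     \<and> (\<forall>r\<le>2*k. E (p r) (p (Suc r)))"

end

theory Submission
  imports Defs
begin


fun walk :: "('a \<Rightarrow> 'a \<Rightarrow> bool) \<Rightarrow> 'a \<Rightarrow> ('a \<times> 'a) list \<Rightarrow> 'a \<Rightarrow> bool" where
  "walk E u [] v = E u v"
| "walk E u (xy # ps) v = (E u (fst xy) \<and> walk E (snd xy) ps v)"

definition ec :: "('a \<Rightarrow> 'a \<Rightarrow> bool) \<Rightarrow> ('a \<times> 'a) list \<Rightarrow> 'a \<Rightarrow> ('a \<times> 'a) list \<Rightarrow> 'a \<Rightarrow> bool" where
  "ec E es u ps v \<longleftrightarrow> ps \<noteq> [] \<and> mset (map edge_mono ps) \<subseteq># mset (map edge_mono es) \<and> walk E u ps v"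

lemma walk_append: "walk E u (xs @ xy # ys) v \<longleftrightarrow> walk E u xs (fst xy) \<and> walk E (snd xy) ys v"
  by (induction xs arbitrary: u) auto

definition rp :: "('a \<times> 'a) list \<Rightarrow> ('a \<times> 'a) list" where
  "rp xs = rev (map (\<lambda>z. (snd z, fst z)) xs)"

lemma walk_rp:
  assumes sym: "\<forall>x y. E x y \<longrightarrow> E y x"
  shows "walk E u (rp xs) v \<longleftrightarrow> walk E v xs u"
proof (induction xs arbitrary: u v)
  case Nil
  then show ?case using sym by (auto simp: rp_def)
next
  case (Cons z xs)
  have "rp (z # xs) = rp xs @ [(snd z, fst z)]" by (simp add: rp_def)
  then show ?case using Cons sym by (auto simp: walk_append)
qed

lemma em_swap: "edge_mono (snd z, fst z) = edge_mono z"
  by (simp add: edge_mono_def add_mset_commute)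

lemma mset_rp: "mset (map edge_mono (rp xs)) = mset (map edge_mono xs)"
  by (simp add: rp_def rev_map[symmetric] o_def em_swap)

lemma length_rp: "length (rp xs) = length xs" by (simp add: rp_def)

lemma set_em: "({a,b} = {c,d}) \<longleftrightarrow> ({#a,b#} = {#c,d#})"
  by (auto simp: add_eq_conv_diff doubleton_eq_iff)

fun wedges :: "'a \<Rightarrow> ('a \<times> 'a) list \<Rightarrow> 'a \<Rightarrow> ('a \<times> 'a) list" where
  "wedges u [] v = [(u,v)]"
| "wedges u (xy # ps) v = (u, fst xy) # wedges (snd xy) ps v"

lemma wedges_edges: "walk E u ps v \<Longrightarrow> \<forall>f\<in>set (wedges u ps v). E (fst f) (snd f)"
  by (induction ps arbitrary: u) auto

lemma wedges_sum: "sum_list (map edge_mono (wedges u ps v)) = {#u,v#} + sum_list (map edge_mono ps)"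
  by (induction ps arbitrary: u) (auto simp: edge_mono_def add_mset_commute)

lemma wedges_len: "length (wedges u ps v) = Suc (length ps)"
  by (induction ps arbitrary: u) auto

lemma remainder:
  "mset (map f xs) \<subseteq># mset (map f ys) \<Longrightarrow> \<exists>R. mset (map f xs) + mset (map f R) = mset (map f ys) \<and> set R \<subseteq> set ys"
proof (induction xs arbitrary: ys)
  case Nil
  then show ?case by (rule_tac x=ys in exI) auto
next
  case (Cons x xs)
  have "f x \<in># mset (map f ys)" using Cons.prems by (simp add: insert_subset_eq_iff)
  then obtain y where y: "y \<in> set ys" "f y = f x" by auto
  define ys' where "ys' = remove1 y ys"
  have m: "mset (map f ys) = add_mset (f x) (mset (map f ys'))"
    using y unfolding ys'_def by (metis image_mset_add_mset in_multiset_in_set insert_DiffM mset_map mset_remove1 set_mset_mset)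
  have "mset (map f xs) \<subseteq># mset (map f ys')" using Cons.prems m by simp
  from Cons.IH[OF this] obtain R where R: "mset (map f xs) + mset (map f R) = mset (map f ys')" "set R \<subseteq> set ys'" by blast
  have "set ys' \<subseteq> set ys" unfolding ys'_def by (rule set_remove1_subset)
  then show ?case using R m by (rule_tac x=R in exI) auto
qed

lemma ec_colon:
  assumes "ec E es u ps v" "\<forall>e\<in>set es. E (fst e) (snd e)"
  shows "in_colon E es {#u,v#}"
proof -
  have sub: "mset (map edge_mono ps) \<subseteq># mset (map edge_mono es)" and w: "walk E u ps v"
    using assms(1) by (auto simp: ec_def)
  from remainder[OF sub] obtain R where R: "mset (map edge_mono ps) + mset (map edge_mono R) = mset (map edge_mono es)" "set R \<subseteq> set es" by blast
  have lenR: "length ps + length R = length es" using arg_cong[OF R(1), of size] by simp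
  have sums: "sum_list (map edge_mono ps) + sum_list (map edge_mono R) = sum_list (map edge_mono es)"
  proof -
    have "sum_list (map edge_mono ps) + sum_list (map edge_mono R) = sum_list (map edge_mono (ps @ R))" by simp
    also have "\<dots> = sum_mset (mset (map edge_mono (ps @ R)))" by (rule sum_mset_sum_list[symmetric])
    also have "mset (map edge_mono (ps @ R)) = mset (map edge_mono es)" using R(1) by simp
    also have "sum_mset \<dots> = sum_list (map edge_mono es)" by (rule sum_mset_sum_list)
    finally show ?thesis .
  qed
  show ?thesis unfolding in_colon_def in_edge_ideal_pow_def
  proof (rule exI[of _ "wedges u ps v @ R"], intro conjI)
    show "length (wedges u ps v @ R) = Suc (length es)" using lenR by (simp add: wedges_len)
    show "\<forall>f\<in>set (wedges u ps v @ R). E (fst f) (snd f)" using wedges_edges[OF w] R(2) assms(2) by auto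
    show "sum_list (map edge_mono (wedges u ps v @ R)) \<subseteq># {#u, v#} + sum_list (map edge_mono es)"
      using sums by (simp add: wedges_sum add.assoc)
  qed
qed

lemma edge_colon:
  assumes "E u v" "\<forall>e\<in>set es. E (fst e) (snd e)"
  shows "in_colon E es {#u,v#}"
  unfolding in_colon_def in_edge_ideal_pow_def
  using assms by (rule_tac x="(u,v) # es" in exI) (auto simp: edge_mono_def)

lemma mem_sum_list: "x \<in># sum_list (map g F) \<longleftrightarrow> (\<exists>f\<in>set F. x \<in># g f)"
  by (induction F) auto

lemma sum_remove1: fixes g :: "'b \<Rightarrow> 'c::comm_monoid_add" shows "f \<in> set F \<Longrightarrow> sum_list (map g F) = g f + sum_list (map g (remove1 f F))"
  by (induction F) (auto simp: add.left_commute)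

lemma mset_remove1_map: "d \<in> set D \<Longrightarrow> mset (map g D) = add_mset (g d) (mset (map g (remove1 d D)))"
  by (induction D) auto

lemma em_mem: "x \<in># edge_mono f \<Longrightarrow> \<exists>y. edge_mono f = {#x,y#} \<and> (f = (x,y) \<or> f = (y,x))"
  by (cases f) (auto simp: edge_mono_def add_mset_commute)



lemma colon_aux:
  assumes sym: "\<forall>x y. E x y \<longrightarrow> E y x"
  shows "\<forall>F a. (\<forall>f\<in>set F. E (fst f) (snd f)) \<longrightarrow> sum_list (map edge_mono F) = {#a,b#} + sum_list (map edge_mono D)
     \<longrightarrow> E a b \<or> (\<exists>Q. Q \<noteq> [] \<and> walk E a Q b \<and> mset (map edge_mono Q) \<subseteq># mset (map edge_mono D))"
proof (induction "length D" arbitrary: D rule: less_induct)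
  case less
  show ?case
  proof (intro allI impI)
    fix F a
    assume Fe: "\<forall>f\<in>set F. E (fst f) (snd f)"
      and eq: "sum_list (map edge_mono F) = {#a,b#} + sum_list (map edge_mono D)"
    have "a \<in># sum_list (map edge_mono F)" using eq by simp
    then obtain f where f: "f \<in> set F" "a \<in># edge_mono f" by (auto simp: mem_sum_list)
    obtain x where x: "edge_mono f = {#a,x#}" "f = (a,x) \<or> f = (x,a)" using em_mem[OF f(2)] by blast
    have "E (fst f) (snd f)" using Fe f(1) by blast
    hence Eax: "E a x" using x(2) sym by auto
    define F' where "F' = remove1 f F"
    have "sum_list (map edge_mono F) = {#a,x#} + sum_list (map edge_mono F')"
      using sum_remove1[OF f(1), of edge_mono] x(1) F'_def by simp
    with eq have eq2: "add_mset x (sum_list (map edge_mono F')) = add_mset b (sum_list (map edge_mono D))"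
      by simp
    show "E a b \<or> (\<exists>Q. Q \<noteq> [] \<and> walk E a Q b \<and> mset (map edge_mono Q) \<subseteq># mset (map edge_mono D))"
    proof (cases "x = b")
      case True
      then show ?thesis using Eax by simp
    next
      case False
      have "x \<in># add_mset b (sum_list (map edge_mono D))" unfolding eq2[symmetric] by simp
      hence "x \<in># sum_list (map edge_mono D)" using False by simp
      then obtain d where d: "d \<in> set D" "x \<in># edge_mono d" by (auto simp: mem_sum_list)
      obtain y where y: "edge_mono d = {#x,y#}" using em_mem[OF d(2)] by blast
      define D' where "D' = remove1 d D"
      have "length D > 0" using d(1) by (cases D) auto
      hence lenD: "length D' < length D" by (simp add: D'_def length_remove1 d(1))
      have "sum_list (map edge_mono D) = {#x,y#} + sum_list (map edge_mono D')"
        using sum_remove1[OF d(1), of edge_mono] y D'_def by simp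
      with eq2 have eq3: "sum_list (map edge_mono F') = {#y,b#} + sum_list (map edge_mono D')"
        by (simp add: add_mset_commute)
      have F'e: "\<forall>f\<in>set F'. E (fst f) (snd f)" using Fe set_remove1_subset[of f F] unfolding F'_def
        by blast
      have IH: "E y b \<or> (\<exists>Q. Q \<noteq> [] \<and> walk E y Q b \<and> mset (map edge_mono Q) \<subseteq># mset (map edge_mono D'))"
        using spec[OF spec[OF less[OF lenD], of F'], of y] F'e eq3 by simp
      have mD: "mset (map edge_mono D) = add_mset (edge_mono (x,y)) (mset (map edge_mono D'))"
      proof -
        have "edge_mono (x,y) = edge_mono d" using y by (simp add: edge_mono_def)
        thus ?thesis using mset_remove1_map[OF d(1), of edge_mono] D'_def by simp
      qed
      obtain Q' where Q': "walk E y Q' b" "mset (map edge_mono Q') \<subseteq># mset (map edge_mono D')"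
      proof (cases "E y b")
        case True
        then show ?thesis by (intro that[of "[]"]) auto
      next
        case False
        then show ?thesis using IH that by auto
      qed
      have "walk E a ((x,y) # Q') b" using Eax Q'(1) by simp
      moreover have "mset (map edge_mono ((x,y) # Q')) \<subseteq># mset (map edge_mono D)"
        using Q'(2) mD by simp
      ultimately show ?thesis by (intro disjI2 exI[of _ "(x,y) # Q'"]) auto
    qed
  qed
qed

lemma size_sum_em: "size (sum_list (map edge_mono xs)) = 2 * length xs"
  by (induction xs) (auto simp: edge_mono_def)

lemma colon_ec:
  assumes sym: "\<forall>x y. E x y \<longrightarrow> E y x" and c: "in_colon E es {#a,b#}" and ne: "\<not> E a b"
  shows "\<exists>Q. ec E es a Q b"
proof -
  obtain fs where fs: "length fs = Suc (length es)" "\<forall>f\<in>set fs. E (fst f) (snd f)"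
    "sum_list (map edge_mono fs) \<subseteq># {#a,b#} + sum_list (map edge_mono es)"
    using c unfolding in_colon_def in_edge_ideal_pow_def by auto
  have "size (sum_list (map edge_mono fs)) = size ({#a,b#} + sum_list (map edge_mono es))"
    using fs(1) by (simp add: size_sum_em)
  note size_eq = this
  have eq: "sum_list (map edge_mono fs) = {#a,b#} + sum_list (map edge_mono es)"
  proof (rule ccontr)
    assume "sum_list (map edge_mono fs) \<noteq> {#a,b#} + sum_list (map edge_mono es)"
    hence "sum_list (map edge_mono fs) \<subset># {#a,b#} + sum_list (map edge_mono es)"
      using fs(3) by (simp add: subset_mset.le_neq_trans)
    from mset_subset_size[OF this] size_eq show False by simp
  qed
  have "E a b \<or> (\<exists>Q. Q \<noteq> [] \<and> walk E a Q b \<and> mset (map edge_mono Q) \<subseteq># mset (map edge_mono es))"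
    using spec[OF spec[OF colon_aux[OF sym, of b es], of fs], of a] fs(2) eq by simp
  with ne show ?thesis unfolding ec_def by blast
qed




lemma cnt0: "count (mset xs) M = length (filter (\<lambda>y. y = M) xs)"
  by (induction xs) auto

lemma cnt: "count (mset xs) M = card {i. i < length xs \<and> xs ! i = M}"
  by (simp add: cnt0 length_filter_conv_card)

lemma set_em': "({fst a, snd a} = {fst c, snd c}) \<longleftrightarrow> (edge_mono a = edge_mono c)"
  unfolding edge_mono_def by (rule set_em)

lemma walk_p:
  assumes ch: "\<forall>r\<le>2*k. E (p r) (p (Suc r))"
  shows "j \<le> k \<Longrightarrow> walk E (p (2*j)) (map (\<lambda>l. (p(2*l+1), p(2*l+2))) [j..<k]) (p(2*k+1))"
proof (induction "k - j" arbitrary: j)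
  case 0
  then have "j = k" by simp
  then show ?case using ch by simp
next
  case (Suc n)
  then have jk: "j < k" by simp
  have "[j..<k] = j # [Suc j..<k]" using jk by (simp add: upt_conv_Cons)
  moreover have "walk E (p (2*Suc j)) (map (\<lambda>l. (p(2*l+1), p(2*l+2))) [Suc j..<k]) (p(2*k+1))"
    using Suc.hyps(1)[of "Suc j"] Suc.hyps(2) jk by simp
  moreover have "E (p (2*j)) (p (Suc (2*j)))" using ch jk by simp
  ultimately show ?case by (simp add: mult_2)
qed

lemma ec_of_even:
  assumes c: "even_connection E es u v k p"
  shows "ec E es u (map (\<lambda>l. (p(2*l+1), p(2*l+2))) [0..<k]) v"
proof -
  define f where "f = (\<lambda>l. (p(2*l+1), p(2*l+2)))"
  have k1: "k \<ge> 1" and p0: "p 0 = u" and pk: "p (2*k+1) = v"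
    and ex: "\<forall>l<k. \<exists>i<length es. {p (2*l+1), p (2*l+2)} = {fst (es!i), snd (es!i)}"
    and cd: "\<forall>i<length es. card {l. l < k \<and> {p (2*l+1), p (2*l+2)} = {fst (es!i), snd (es!i)}}
                     \<le> card {j. j < length es \<and> {fst (es!j), snd (es!j)} = {fst (es!i), snd (es!i)}}"
    and ch: "\<forall>r\<le>2*k. E (p r) (p (Suc r))"
    using c unfolding even_connection_def by auto
  have w: "walk E u (map f [0..<k]) v"
    using walk_p[where k=k and E=E and p=p and j=0, OF ch] p0 pk unfolding f_def by simp
  have sub: "mset (map edge_mono (map f [0..<k])) \<subseteq># mset (map edge_mono es)"
    unfolding subseteq_mset_def
  proof
    fix M
    show "count (mset (map edge_mono (map f [0..<k]))) M \<le> count (mset (map edge_mono es)) M"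
    proof (cases "\<exists>l<k. edge_mono (f l) = M")
      case True
      then obtain l where l: "l < k" "edge_mono (f l) = M" by blast
      then obtain i where i: "i < length es" "{p (2*l+1), p (2*l+2)} = {fst (es!i), snd (es!i)}"
        using ex by blast
      have Mi: "M = edge_mono (es!i)" using i(2) l(2) set_em'[of "f l" "es!i"] unfolding f_def by simp
      have "count (mset (map edge_mono (map f [0..<k]))) M = card {l. l < k \<and> edge_mono (f l) = M}"
        unfolding cnt by (intro arg_cong[where f=card] Collect_cong) auto
      also have "{l. l < k \<and> edge_mono (f l) = M} = {l. l < k \<and> {p (2*l+1), p (2*l+2)} = {fst (es!i), snd (es!i)}}"
      proof (rule Collect_cong)
        fix l
        show "(l < k \<and> edge_mono (f l) = M) = (l < k \<and> {p (2*l+1), p (2*l+2)} = {fst (es!i), snd (es!i)})"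
          using set_em'[of "f l" "es!i"] Mi unfolding f_def by simp
      qed
      also have "card \<dots> \<le> card {j. j < length es \<and> {fst (es!j), snd (es!j)} = {fst (es!i), snd (es!i)}}"
        using cd i(1) by blast
      also have "{j. j < length es \<and> {fst (es!j), snd (es!j)} = {fst (es!i), snd (es!i)}} = {j. j < length es \<and> edge_mono (es!j) = M}"
      proof (rule Collect_cong)
        fix j
        show "(j < length es \<and> {fst (es!j), snd (es!j)} = {fst (es!i), snd (es!i)}) = (j < length es \<and> edge_mono (es!j) = M)"
          using set_em'[of "es!j" "es!i"] Mi by simp
      qed
      also have "card \<dots> = count (mset (map edge_mono es)) M"
        unfolding cnt by (intro arg_cong[where f=card] Collect_cong) auto
      finally show ?thesis .
    next
      case False
      then have "M \<notin># mset (map edge_mono (map f [0..<k]))" by auto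
      then have "count (mset (map edge_mono (map f [0..<k]))) M = 0"
        using not_in_iff[of M "mset (map edge_mono (map f [0..<k]))"] by blast
      then show ?thesis by simp
    qed
  qed
  have "map f [0..<k] \<noteq> []" using k1 by simp
  then show ?thesis using w sub unfolding ec_def f_def by simp
qed

fun pf :: "'a \<Rightarrow> ('a \<times> 'a) list \<Rightarrow> 'a \<Rightarrow> nat \<Rightarrow> 'a" where
  "pf u [] v n = (if n = 0 then u else v)"
| "pf u (xy # ps) v n = (if n = 0 then u else if n = 1 then fst xy else pf (snd xy) ps v (n - 2))"

lemma pf0: "pf u ps v 0 = u" by (cases ps) auto

lemma pf_end: "pf u ps v (2 * length ps + 1) = v"
  by (induction ps arbitrary: u) auto

lemma pf_mid: "l < length ps \<Longrightarrow> pf u ps v (2*l+1) = fst (ps!l) \<and> pf u ps v (2*l+2) = snd (ps!l)"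
proof (induction ps arbitrary: u l)
  case Nil
  then show ?case by simp
next
  case (Cons xy ps)
  show ?case
  proof (cases l)
    case 0
    then show ?thesis by (simp add: pf0)
  next
    case (Suc m)
    then have "m < length ps" using Cons.prems by simp
    from Cons.IH[OF this, of "snd xy"] show ?thesis using Suc by simp
  qed
qed

lemma pf_chain:
  "walk E u ps v \<Longrightarrow> \<forall>xy\<in>set ps. E (fst xy) (snd xy) \<Longrightarrow> r \<le> 2 * length ps \<Longrightarrow> E (pf u ps v r) (pf u ps v (Suc r))"
proof (induction ps arbitrary: u r)
  case Nil
  then show ?case by simp
next
  case (Cons xy ps)
  consider "r = 0" | "r = 1" | "r \<ge> 2" by linarith
  then show ?case
  proof cases
    case 1
    then show ?thesis using Cons.prems by simp
  next
    case 2
    then show ?thesis using Cons.prems by (simp add: pf0)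
  next
    case 3
    have "E (pf (snd xy) ps v (r - 2)) (pf (snd xy) ps v (Suc (r - 2)))"
      using Cons.IH[of "snd xy" "r - 2"] Cons.prems 3 by simp
    moreover have "Suc r - 2 = Suc (r - 2)" using 3 by simp
    ultimately show ?thesis using 3 by simp
  qed
qed

lemma even_of_ec:
  assumes c: "ec E es u ps v" and ese: "\<forall>e\<in>set es. E (fst e) (snd e)" and sym: "\<forall>x y. E x y \<longrightarrow> E y x"
  shows "even_connection E es u v (length ps) (pf u ps v)"
proof -
  have ne: "ps \<noteq> []" and sub: "mset (map edge_mono ps) \<subseteq># mset (map edge_mono es)" and w: "walk E u ps v"
    using c unfolding ec_def by auto
  have inn: "\<And>l. l < length ps \<Longrightarrow> \<exists>i<length es. edge_mono (ps!l) = edge_mono (es!i)"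
  proof -
    fix l assume l: "l < length ps"
    have "edge_mono (ps!l) \<in># mset (map edge_mono ps)" using l by simp
    hence "edge_mono (ps!l) \<in># mset (map edge_mono es)" by (rule mset_subset_eqD[OF sub])
    hence "edge_mono (ps!l) \<in> set (map edge_mono es)" by simp
    then obtain i where "i < length es" "map edge_mono es ! i = edge_mono (ps!l)"
      by (metis in_set_conv_nth length_map)
    then show "\<exists>i<length es. edge_mono (ps!l) = edge_mono (es!i)" by auto
  qed
  have pe: "\<forall>xy\<in>set ps. E (fst xy) (snd xy)"
  proof
    fix xy assume "xy \<in> set ps"
    then obtain l where l: "l < length ps" "ps!l = xy" by (metis in_set_conv_nth)
    obtain i where i: "i < length es" "edge_mono xy = edge_mono (es!i)" using inn[OF l(1)] l(2) by blast
    have "{fst xy, snd xy} = {fst (es!i), snd (es!i)}" using i(2) set_em'[of xy "es!i"] by simp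
    moreover have "E (fst (es!i)) (snd (es!i))" using ese i(1) by simp
    ultimately show "E (fst xy) (snd xy)" using sym by (auto simp: doubleton_eq_iff)
  qed
  show ?thesis unfolding even_connection_def
  proof (intro conjI allI impI)
    show "1 \<le> length ps" using ne by (cases ps) auto
    show "pf u ps v 0 = u" by (rule pf0)
    show "pf u ps v (2 * length ps + 1) = v" by (rule pf_end)
    show "E (pf u ps v r) (pf u ps v (Suc r))" if "r \<le> 2 * length ps" for r
      using pf_chain[OF w pe that] .
    fix l assume l: "l < length ps"
    obtain i where i: "i < length es" "edge_mono (ps!l) = edge_mono (es!i)" using inn[OF l] by blast
    have "{pf u ps v (2*l+1), pf u ps v (2*l+2)} = {fst (ps!l), snd (ps!l)}" using pf_mid[OF l] by simp
    then have "{pf u ps v (2 * l + 1), pf u ps v (2 * l + 2)} = {fst (es ! i), snd (es ! i)}"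
      using i(2) set_em'[of "ps!l" "es!i"] by simp
    then show "\<exists>i<length es. {pf u ps v (2 * l + 1), pf u ps v (2 * l + 2)} = {fst (es ! i), snd (es ! i)}"
      using i(1) by blast
  next
    fix i assume i: "i < length es"
    have "{l. l < length ps \<and> {pf u ps v (2 * l + 1), pf u ps v (2 * l + 2)} = {fst (es ! i), snd (es ! i)}}
        = {l. l < length ps \<and> edge_mono (ps!l) = edge_mono (es!i)}"
    proof (rule Collect_cong)
      fix l
      show "(l < length ps \<and> {pf u ps v (2 * l + 1), pf u ps v (2 * l + 2)} = {fst (es ! i), snd (es ! i)}) =
            (l < length ps \<and> edge_mono (ps!l) = edge_mono (es!i))"
      proof (cases "l < length ps")
        case True
        then show ?thesis using pf_mid[of l ps u v] set_em'[of "ps!l" "es!i"] by simp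
      qed simp
    qed
    also have "card \<dots> = count (mset (map edge_mono ps)) (edge_mono (es!i))" unfolding cnt by (intro arg_cong[where f=card] Collect_cong) auto
    also have "\<dots> \<le> count (mset (map edge_mono es)) (edge_mono (es!i))" using sub by (rule mset_subset_eq_count)
    also have "\<dots> = card {j. j < length es \<and> edge_mono (es!j) = edge_mono (es!i)}" unfolding cnt by (intro arg_cong[where f=card] Collect_cong) auto
    also have "{j. j < length es \<and> edge_mono (es!j) = edge_mono (es!i)} = {j. j < length es \<and> {fst (es ! j), snd (es ! j)} = {fst (es ! i), snd (es ! i)}}"
    proof (rule Collect_cong)
      fix j
      show "(j < length es \<and> edge_mono (es!j) = edge_mono (es!i)) = (j < length es \<and> {fst (es ! j), snd (es ! j)} = {fst (es ! i), snd (es ! i)})"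
        using set_em'[of "es!j" "es!i"] by auto
    qed
    finally show "card {l. l < length ps \<and> {pf u ps v (2 * l + 1), pf u ps v (2 * l + 2)} = {fst (es ! i), snd (es ! i)}}
                  \<le> card {j. j < length es \<and> {fst (es ! j), snd (es ! j)} = {fst (es ! i), snd (es ! i)}}" .
  qed
qed




lemma mset_rp': "image_mset edge_mono (mset (rp xs)) = image_mset edge_mono (mset xs)"
  using mset_rp[of xs] by (simp add: mset_map)

lemma disj_sub:
  assumes "A \<subseteq># M" "B \<subseteq># M" "set_mset A \<inter> set_mset B = {}"
  shows "A + B \<subseteq># M"
  unfolding subseteq_mset_def
proof
  fix x
  show "count (A + B) x \<le> count M x"
  proof (cases "x \<in># A")
    case True
    then have "x \<notin># B" using assms(3) by blast
    then have "count B x = 0" by (simp add: not_in_iff)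
    then show ?thesis using mset_subset_eq_count[OF assms(1)] by simp
  next
    case False
    then have "count A x = 0" by (simp add: not_in_iff)
    then show ?thesis using mset_subset_eq_count[OF assms(2)] by simp
  qed
qed

lemma pair_edge:
  assumes c: "ec E es x ps y" and ese: "\<forall>e\<in>set es. E (fst e) (snd e)" and sym: "\<forall>x y. E x y \<longrightarrow> E y x"
    and w: "w \<in> set ps"
  shows "E (fst w) (snd w)"
proof -
  have sub: "mset (map edge_mono ps) \<subseteq># mset (map edge_mono es)" using c unfolding ec_def by auto
  have "edge_mono w \<in># mset (map edge_mono ps)" using w by simp
  hence "edge_mono w \<in># mset (map edge_mono es)" by (rule mset_subset_eqD[OF sub])
  then obtain e where e: "e \<in> set es" "edge_mono w = edge_mono e" by auto
  have "{fst w, snd w} = {fst e, snd e}" using e(2) set_em'[of w e] by simp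
  moreover have "E (fst e) (snd e)" using ese e(1) by simp
  ultimately show ?thesis using sym by (auto simp: doubleton_eq_iff)
qed

lemma key:
  assumes sym: "\<forall>x y. E x y \<longrightarrow> E y x" and gf: "gap_free E"
    and ese: "\<forall>e\<in>set es. E (fst e) (snd e)"
    and P: "ec E es u P v"
    and mx: "\<forall>x y ps. x \<in> T \<and> y \<in> T \<and> ec E es x ps y \<longrightarrow> length ps \<le> length P"
    and vT: "v \<in> T" and aT: "a \<in> T" and bT: "b \<in> T"
    and Q: "ec E es a Q b"
  shows "in_colon E es {#u,a#} \<or> in_colon E es {#u,b#}"
proof (rule ccontr)
  assume "\<not> (in_colon E es {#u,a#} \<or> in_colon E es {#u,b#})"
  then have nJa: "\<not> in_colon E es {#u,a#}" and nJb: "\<not> in_colon E es {#u,b#}" by auto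
  have nEa: "\<not> E u a" using nJa edge_colon[OF _ ese] by blast
  have nEb: "\<not> E u b" using nJb edge_colon[OF _ ese] by blast
  have nRa: "\<not> ec E es u R a" for R using nJa ec_colon[OF _ ese] by blast
  have nRb: "\<not> ec E es u R b" for R using nJb ec_colon[OF _ ese] by blast
  define M where "M = mset (map edge_mono es)"
  have Pne: "P \<noteq> []" and mP: "mset (map edge_mono P) \<subseteq># M" and wP: "walk E u P v"
    using P unfolding ec_def M_def by auto
  have Qne: "Q \<noteq> []" and mQ: "mset (map edge_mono Q) \<subseteq># M" and wQ: "walk E a Q b"
    using Q unfolding ec_def M_def by auto
  show False
  proof (cases "\<exists>z\<in>set P. edge_mono z \<in> edge_mono ` set Q")
    case True
    then obtain P1 z P2 where Pz: "P = P1 @ z # P2" "edge_mono z \<in> edge_mono ` set Q"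
      and P1: "\<forall>w\<in>set P1. edge_mono w \<notin> edge_mono ` set Q"
      using split_list_first_prop[of P "\<lambda>z. edge_mono z \<in> edge_mono ` set Q"] by blast
    then obtain z' where z': "z' \<in> set Q" "edge_mono z' = edge_mono z" by auto
    then obtain Q1 Q2 where Qz: "Q = Q1 @ z' # Q2" by (meson split_list)
    have w1: "walk E u P1 (fst z)" and w2: "walk E (snd z) P2 v" using wP Pz(1) walk_append[of E u P1 z P2 v] by simp_all
    have w3: "walk E a Q1 (fst z')" and w4: "walk E (snd z') Q2 b" using wQ Qz walk_append[of E a Q1 z' Q2 b] by simp_all
    have "{fst z, snd z} = {fst z', snd z'}" using z'(2) set_em'[of z z'] by simp
    then have orient: "(fst z = fst z' \<and> snd z = snd z') \<or> (fst z = snd z' \<and> snd z = fst z')"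
      by (auto simp: doubleton_eq_iff)
    define A where "A = mset (map edge_mono P1)"
    have AM: "A \<subseteq># M" using mP Pz(1) unfolding A_def
      by (metis map_append mset_append mset_subset_eq_add_left subset_mset.dual_order.trans)
    have Adisj: "set_mset A \<inter> edge_mono ` set Q = {}" using P1 unfolding A_def by auto
    have mQ': "mset (map edge_mono Q) = mset (map edge_mono Q1) + add_mset (edge_mono z) (mset (map edge_mono Q2))"
      using Qz z'(2) by simp
    show False
    proof (cases "fst z = fst z' \<and> snd z = snd z'")
      case True
      define R where "R = P1 @ z # Q2"
      have "walk E u R b" unfolding R_def walk_append using w1 w4 True by simp
      moreover have "mset (map edge_mono R) \<subseteq># M"
      proof -
        have B: "add_mset (edge_mono z) (mset (map edge_mono Q2)) \<subseteq># M"
          using mQ mQ' by (metis mset_subset_eq_add_right subset_mset.dual_order.trans)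
        have "set_mset A \<inter> set_mset (add_mset (edge_mono z) (mset (map edge_mono Q2))) = {}"
          using Adisj Pz(2) Qz by auto
        from disj_sub[OF AM B this] show ?thesis unfolding R_def A_def by simp
      qed
      ultimately have "ec E es u R b" unfolding ec_def M_def R_def by simp
      then show False using nRb by blast
    next
      case False
      then have o2: "fst z = snd z' \<and> snd z = fst z'" using orient by blast
      define R where "R = P1 @ z # rp Q1"
      have "walk E (snd z) (rp Q1) a" using walk_rp[OF sym] w3 o2 by simp
      then have "walk E u R a" unfolding R_def walk_append using w1 by simp
      moreover have "mset (map edge_mono R) \<subseteq># M"
      proof -
        have B: "add_mset (edge_mono z) (mset (map edge_mono Q1)) \<subseteq># M"
          using mQ mQ' by (metis add_mset_add_single mset_subset_eq_add_left subset_mset.dual_order.trans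
              union_commute union_assoc)
        have "set_mset A \<inter> set_mset (add_mset (edge_mono z) (mset (map edge_mono Q1))) = {}"
          using Adisj Pz(2) Qz by auto
        from disj_sub[OF AM B this] show ?thesis unfolding R_def A_def by (simp add: mset_rp')
      qed
      ultimately have "ec E es u R a" unfolding ec_def M_def R_def by simp
      then show False using nRa by blast
    qed
  next
    case False
    then have disj: "set_mset (mset (map edge_mono P)) \<inter> set_mset (mset (map edge_mono Q)) = {}" by auto
    obtain z P2 where Pz: "P = z # P2" using Pne by (cases P) auto
    obtain w Q2 where Qw: "Q = w # Q2" using Qne by (cases Q) auto
    have Eup1: "E u (fst z)" using wP Pz by simp
    have wP2: "walk E (snd z) P2 v" using wP Pz by simp
    have Eaq1: "E a (fst w)" using wQ Qw by simp
    have wQ2: "walk E (snd w) Q2 b" using wQ Qw by simp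
    have Eq: "E (fst w) (snd w)" using pair_edge[OF Q ese sym] Qw by simp
    have "mset (map edge_mono Q2) \<subseteq># mset (map edge_mono Q)" using Qw by auto
    then have mQ2: "mset (map edge_mono Q2) \<subseteq># M" using mQ by (rule subset_mset.order_trans)
    have "edge_mono w \<in># mset (map edge_mono Q)" using Qw by simp
    then have "edge_mono w \<in># M" by (rule mset_subset_eqD[OF mQ])
    then have mw: "{#edge_mono w#} \<subseteq># M" by simp
    have back_a: False if "E u (snd w)"
    proof -
      have "walk E u [(snd w, fst w)] a" using that Eaq1 sym by simp
      moreover have "mset (map edge_mono [(snd w, fst w)]) \<subseteq># M" using mw by (simp add: em_swap)
      ultimately have "ec E es u [(snd w, fst w)] a" unfolding ec_def M_def by simp
      then show False using nRa by blast
    qed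
    have fwd_b: False if "E u (fst w)"
    proof -
      have "walk E u Q b" using that wQ2 Qw by simp
      then have "ec E es u Q b" using Qne mQ unfolding ec_def M_def by simp
      then show False using nRb by blast
    qed
    have "\<not> (E u (fst z) \<and> E (fst w) (snd w) \<and> u \<noteq> fst w \<and> u \<noteq> snd w \<and> fst z \<noteq> fst w \<and> fst z \<noteq> snd w
       \<and> \<not> E u (fst w) \<and> \<not> E u (snd w) \<and> \<not> E (fst z) (fst w) \<and> \<not> E (fst z) (snd w))"
      using gf unfolding gap_free_def by blast
    then consider "u = fst w" | "u = snd w" | "fst z = fst w" | "fst z = snd w" | "E u (fst w)" | "E u (snd w)"
      | "E (fst z) (fst w)" | "E (fst z) (snd w)" using Eup1 Eq by blast
    then show False
    proof cases
      case 1
      then show False using Eaq1 sym nEa by auto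
    next
      case 2
      show False
      proof (cases Q2)
        case Nil
        then show False using wQ2 2 nEb by simp
      next
        case (Cons w' Q3)
        then have "ec E es u Q2 b" using wQ2 2 mQ2 unfolding ec_def M_def by simp
        then show False using nRb by blast
      qed
    next
      case 3
      then show False using fwd_b Eup1 by simp
    next
      case 4
      then show False using back_a Eup1 by simp
    next
      case 5
      then show False using fwd_b by simp
    next
      case 6
      then show False using back_a by simp
    next
      case 7
      define R where "R = rp Q @ P"
      have "rp Q = rp Q2 @ [(snd w, fst w)]" using Qw by (simp add: rp_def)
      then have R: "R = rp Q2 @ (snd w, fst w) # P" unfolding R_def by simp
      have "walk E b (rp Q2) (snd w)" using walk_rp[OF sym] wQ2 by simp
      moreover have "walk E (fst w) P v" using 7 sym wP2 Pz by simp
      ultimately have "walk E b R v" unfolding R walk_append by simp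
      moreover have "mset (map edge_mono R) \<subseteq># M"
        using disj_sub[OF mQ mP] disj unfolding R_def by (auto simp: mset_rp')
      moreover have "R \<noteq> []" unfolding R_def using Pne by simp
      ultimately have "ec E es b R v" unfolding ec_def M_def by simp
      then have "length R \<le> length P" using mx bT vT by blast
      then show False unfolding R_def using Qne by (simp add: length_rp)
    next
      case 8
      define R where "R = w # P"
      have "walk E a R v" unfolding R_def using Eaq1 8 sym wP2 Pz by simp
      moreover have "mset (map edge_mono R) \<subseteq># M"
      proof -
        have "set_mset {#edge_mono w#} \<inter> set_mset (mset (map edge_mono P)) = {}"
          using disj Qw by auto
        from disj_sub[OF mw mP this] show ?thesis unfolding R_def by simp
      qed
      ultimately have "ec E es a R v" unfolding ec_def M_def R_def by simp
      then have "length R \<le> length P" using mx aT vT by blast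
      then show False unfolding R_def by simp
    qed
  qed
qed




theorem lemma6p18:
  fixes V :: "'a set" and E :: "'a \<Rightarrow> 'a \<Rightarrow> bool" and es :: "('a \<times> 'a) list"
    and Y :: "('a + 'a) set" and u v :: 'a and k :: nat and p :: "nat \<Rightarrow> 'a"
  assumes G: "simple_graph V E" and gf: "gap_free E"
    and s: "length es \<ge> 1" and es_edges: "\<forall>e\<in>set es. E (fst e) (snd e)"
    and Y: "Y \<subseteq> polG_vertices V E es"
    and uv: "u \<in> V" "v \<in> V" "Inl u \<notin> Y" "Inl v \<notin> Y"
    and conn: "even_connection E es u v k p"
    and maxk: "\<forall>u'' v'' k' p'. u'' \<in> V \<and> v'' \<in> V \<and> Inl u'' \<notin> Y \<and> Inl v'' \<notin> Y
                  \<and> even_connection E es u'' v'' k' p' \<longrightarrow> k' \<le> k"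
  shows "let VH = polG_vertices V E es - Y;
             EH = (\<lambda>a b. a \<in> VH \<and> b \<in> VH \<and> polG_edge V E es a b);
             st = insert (Inl u) {b \<in> VH. EH (Inl u) b};
             W = VH - st
         in \<exists>U Z. U \<subseteq> V \<and> Z \<subseteq> range Inr \<and> W = Inl ` U \<union> Z
              \<and> (\<forall>a\<in>U. \<forall>b\<in>U. EH (Inl a) (Inl b) \<longleftrightarrow> E a b)
              \<and> (\<forall>z\<in>Z. \<forall>w\<in>W. \<not> EH z w)"
proof -
  have sym: "\<forall>x y. E x y \<longrightarrow> E y x" and irr: "\<forall>x. \<not> E x x"
    using G unfolding simple_graph_def by auto
  define T where "T = {x \<in> V. Inl x \<notin> Y}"
  define P where "P = map (\<lambda>l. (p(2*l+1), p(2*l+2))) [0..<k]"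
  have P: "ec E es u P v" unfolding P_def by (rule ec_of_even[OF conn])
  have lenP: "length P = k" unfolding P_def by simp
  have mx: "\<forall>x y ps. x \<in> T \<and> y \<in> T \<and> ec E es x ps y \<longrightarrow> length ps \<le> length P"
  proof (intro allI impI)
    fix x y ps assume h: "x \<in> T \<and> y \<in> T \<and> ec E es x ps y"
    have "even_connection E es x y (length ps) (pf x ps y)"
      using even_of_ec[OF _ es_edges sym] h by blast
    then show "length ps \<le> length P" using maxk h lenP unfolding T_def by blast
  qed
  have vT: "v \<in> T" unfolding T_def using uv by simp
  have claim: "in_colon E es {#u,a#} \<or> in_colon E es {#u,b#}"
    if hh: "a \<in> T" "b \<in> T" "in_colon E es {#a,b#}" "\<not> E a b" for a b
  proof -
    obtain Q where "ec E es a Q b" using colon_ec[OF sym hh(3,4)] by blast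
    then show ?thesis using key[OF sym gf es_edges P mx vT hh(1,2)] by blast
  qed
  define VH where "VH = polG_vertices V E es - Y"
  define EH where "EH = (\<lambda>a b. a \<in> VH \<and> b \<in> VH \<and> polG_edge V E es a b)"
  define st where "st = insert (Inl u) {b \<in> VH. EH (Inl u) b}"
  define W where "W = VH - st"
  have uVH: "Inl u \<in> VH" unfolding VH_def polG_vertices_def using uv by simp
  have WL: "a \<in> V \<and> Inl a \<notin> Y \<and> a \<noteq> u \<and> \<not> in_colon E es {#u,a#}" if "Inl a \<in> W" for a
  proof -
    have "Inl a \<in> VH" "Inl a \<notin> st" using that unfolding W_def by auto
    then show ?thesis using uVH unfolding st_def EH_def VH_def polG_vertices_def by auto
  qed
  define U where "U = {a \<in> V. Inl a \<in> W}"
  define Z where "Z = W \<inter> range Inr"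
  have "\<exists>U Z. U \<subseteq> V \<and> Z \<subseteq> range Inr \<and> W = Inl ` U \<union> Z
              \<and> (\<forall>a\<in>U. \<forall>b\<in>U. EH (Inl a) (Inl b) \<longleftrightarrow> E a b)
              \<and> (\<forall>z\<in>Z. \<forall>w\<in>W. \<not> EH z w)"
  proof (intro exI[of _ U] exI[of _ Z] conjI)
    show "U \<subseteq> V" unfolding U_def by auto
    show "Z \<subseteq> range Inr" unfolding Z_def by auto
    show "W = Inl ` U \<union> Z"
    proof
      show "W \<subseteq> Inl ` U \<union> Z"
      proof
        fix x assume x: "x \<in> W"
        show "x \<in> Inl ` U \<union> Z"
        proof (cases x)
          case (Inl a)
          then have "a \<in> U" using x WL unfolding U_def by auto
          then show ?thesis using Inl by auto
        next
          case (Inr a)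
          then show ?thesis using x unfolding Z_def by auto
        qed
      qed
      show "Inl ` U \<union> Z \<subseteq> W" unfolding U_def Z_def by auto
    qed
    show "\<forall>a\<in>U. \<forall>b\<in>U. EH (Inl a) (Inl b) \<longleftrightarrow> E a b"
    proof (intro ballI)
      fix a b assume a: "a \<in> U" and b: "b \<in> U"
      have aW: "Inl a \<in> W" and bW: "Inl b \<in> W" using a b unfolding U_def by auto
      have aVH: "Inl a \<in> VH" and bVH: "Inl b \<in> VH" using aW bW unfolding W_def by auto
      note wa = WL[OF aW] and wb = WL[OF bW]
      show "EH (Inl a) (Inl b) \<longleftrightarrow> E a b"
      proof
        assume h: "EH (Inl a) (Inl b)"
        then have c: "in_colon E es {#a,b#}" unfolding EH_def by simp
        show "E a b"
        proof (rule ccontr)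
          assume "\<not> E a b"
          then have "in_colon E es {#u,a#} \<or> in_colon E es {#u,b#}"
            using claim[of a b] c wa wb unfolding T_def by blast
          then show False using wa wb by blast
        qed
      next
        assume h: "E a b"
        have "a \<noteq> b" using h irr by auto
        moreover have "in_colon E es {#a,b#}" using edge_colon[OF h es_edges] .
        ultimately show "EH (Inl a) (Inl b)" unfolding EH_def using aVH bVH wa wb by simp
      qed
    qed
    show "\<forall>z\<in>Z. \<forall>w\<in>W. \<not> EH z w"
    proof (intro ballI)
      fix z w assume z: "z \<in> Z" and w: "w \<in> W"
      obtain x where zx: "z = Inr x" using z unfolding Z_def by auto
      show "\<not> EH z w"
      proof
        assume h: "EH z w"
        show False
        proof (cases w)
          case (Inl y)
          then have "y = x" "in_colon E es {#x,x#}" using h zx unfolding EH_def by auto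
          then have wx: "Inl x \<in> W" using w Inl by simp
          note wl = WL[OF wx]
          have "in_colon E es {#u,x#} \<or> in_colon E es {#u,x#}"
            using claim[of x x] wl \<open>in_colon E es {#x,x#}\<close> irr unfolding T_def by blast
          then show False using wl by blast
        next
          case (Inr y)
          then show False using h zx unfolding EH_def by simp
        qed
      qed
    qed
  qed
  then show ?thesis unfolding Let_def VH_def EH_def st_def W_def .
qed


end
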